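(* Let $R$ be a ring, $\mathcal C$ a Cartier $R$-algebra and $\mathfrak a\subset R$ a $\mathcal C$-ideal. If $(R,\mathcal C)$ is purely $F$-regular along $\mathfrak a$, then $(R,\mathcal C)$ is $F$-pure, $\mathfrak a$ is a radical ideal, and the minimal primes of $\mathfrak a$ are pairwise coprime (i.e. any two distinct minimal primes $\mathfrak p_i,\mathfrak p_j$ satisfy $\mathfrak p_i+\mathfrak p_j=R$).
   Context: All rings are noetherian $F$-finite commutative $\mathbb F_p$-algebras. $F^e_*R$ is $R$ viewed as an $R$-module via the $e$-th Frobenius $r\mapsto r^{p^e}$, and $\mathcal C_{e,R}=\operatorname{Hom}_R(F^e_*R,R)$ ($\mathcal C_{0,R}=R$). The full Cartier algebra $\mathcal C_R=\bigoplus_{e\ge0}\mathcal C_{e,R}$ has product $\phi\cdot\phi'=\phi\circ F^e_*\phi'$ for $\phi\in\mathcal C_{e,R}$, $\phi'\in\mathcal C_{e',R}$. A Cartier $R$-algebra is a graded $R$-subalgebra $\mathcal C=\bigoplus_e\mathcal C_e\subseteq\mathcal C_R$; $\mathcal C_+=\bigoplus_{e>0}\mathcal C_e$. An ideal $\mathfrak b$ is a $\mathcal C$-ideal if $\phi(F^e_*\mathfrak b)\subseteq\mathfrak b$ for all $\phi\in\mathcal C_e$, all $e$. For an ideal $\mathfrak b$, $\mathcal C_+\mathfrak b$ is the ideal generated by all $\phi(F^e_*b)$ with $e>0$, $\phi\in\mathcal C_e$, $b\in\mathfrak b$. $(R,\mathcal C)$ is $F$-pure if $\mathcal C_+R=R$.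 A prime $\mathcal C$-ideal $\mathfrak p$ is a center of $F$-purity if $\mathcal C_+R\not\subseteq\mathfrak p$. $(R,\mathcal C)$ is non-degenerate along a $\mathcal C$-ideal $\mathfrak a$ if every minimal prime of $\mathfrak a$ is a center of $F$-purity, and purely $F$-regular along $\mathfrak a$ if it is non-degenerate along $\mathfrak a$ and every proper $\mathcal C$-ideal is contained in some minimal prime of $\mathfrak a$. *)

theory Defs
  imports "HOL-Computational_Algebra.Primes"
begin

definition is_ideal :: "'a::comm_ring_1 set \<Rightarrow> bool" where
  "is_ideal I \<longleftrightarrow> 0 \<in> I \<and> (\<forall>x\<in>I. \<forall>y\<in>I. x + y \<in> I) \<and> (\<forall>r. \<forall>x\<in>I. r * x \<in> I)"

definition ideal_gen :: "'a::comm_ring_1 set \<Rightarrow> 'a set" where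
  "ideal_gen S = \<Inter> {I. is_ideal I \<and> S \<subseteq> I}"

definition is_prime_ideal :: "'a::comm_ring_1 set \<Rightarrow> bool" where
  "is_prime_ideal P \<longleftrightarrow> is_ideal P \<and> P \<noteq> UNIV \<and> (\<forall>x y. x * y \<in> P \<longrightarrow> x \<in> P \<or> y \<in> P)"

definition minimal_primes :: "'a::comm_ring_1 set \<Rightarrow> 'a set set" where
  "minimal_primes I = {P. is_prime_ideal P \<and> I \<subseteq> P \<and>
      (\<forall>Q. is_prime_ideal Q \<and> I \<subseteq> Q \<and> Q \<subseteq> P \<longrightarrow> Q = P)}"

definition radical :: "'a::comm_ring_1 set \<Rightarrow> 'a set" where
  "radical I = {x. \<exists>n. x ^ n \<in> I}"

definition is_radical_ideal :: "'a::comm_ring_1 set \<Rightarrow> bool" where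
  "is_radical_ideal I \<longleftrightarrow> is_ideal I \<and> radical I = I"

definition ideal_sum :: "'a::comm_ring_1 set \<Rightarrow> 'a set \<Rightarrow> 'a set" where
  "ideal_sum I J = {x + y | x y. x \<in> I \<and> y \<in> J}"

definition noetherian :: "'a::comm_ring_1 itself \<Rightarrow> bool" where
  "noetherian _ \<longleftrightarrow> (\<forall>I::'a set. is_ideal I \<longrightarrow> (\<exists>S. finite S \<and> I = ideal_gen S))"

definition char_p_ring :: "'a::comm_ring_1 itself \<Rightarrow> nat \<Rightarrow> bool" where
  "char_p_ring _ p \<longleftrightarrow> prime p \<and> of_nat p = (0::'a)"

text \<open>F-finite: F_*R is a finitely generated R-module, i.e. there is a finite set S
  such that every x is of the form sum over s in S of r_s^p * s.\<close>
definition F_finite :: "'a::comm_ring_1 itself \<Rightarrow> nat \<Rightarrow> bool" where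
  "F_finite _ p \<longleftrightarrow> (\<exists>S::'a set. finite S \<and> (\<forall>x. \<exists>c. x = (\<Sum>s\<in>S. (c s) ^ p * s)))"

text \<open>An element of Hom_R(F^e_* R, R): an additive map phi with
  phi(r^(p^e) x) = r phi(x).\<close>
definition cartier_maps :: "nat \<Rightarrow> nat \<Rightarrow> ('a::comm_ring_1 \<Rightarrow> 'a) set" where
  "cartier_maps p e = {\<phi>. (\<forall>x y. \<phi> (x + y) = \<phi> x + \<phi> y) \<and>
                          (\<forall>r x. \<phi> (r ^ (p ^ e) * x) = r * \<phi> x)}"

text \<open>A Cartier R-algebra: a graded R-subalgebra of the full Cartier algebra, with
  product phi . psi = phi o F^e_* psi (as functions, composition).  Degree 0 piece is R,
  acting by multiplication.\<close>
definition cartier_algebra :: "nat \<Rightarrow> (nat \<Rightarrow> ('a::comm_ring_1 \<Rightarrow> 'a) set) \<Rightarrow> bool" where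
  "cartier_algebra p C \<longleftrightarrow>
     (\<forall>e. C e \<subseteq> cartier_maps p e) \<and>
     C 0 = {(\<lambda>x. r * x) | r. True} \<and>
     (\<forall>e. (\<lambda>_. 0) \<in> C e) \<and>
     (\<forall>e. \<forall>\<phi>\<in>C e. \<forall>\<psi>\<in>C e. (\<lambda>x. \<phi> x + \<psi> x) \<in> C e) \<and>
     (\<forall>e e'. \<forall>\<phi>\<in>C e. \<forall>\<psi>\<in>C e'. \<phi> \<circ> \<psi> \<in> C (e + e'))"

definition is_C_ideal :: "(nat \<Rightarrow> ('a::comm_ring_1 \<Rightarrow> 'a) set) \<Rightarrow> 'a set \<Rightarrow> bool" where
  "is_C_ideal C b \<longleftrightarrow> is_ideal b \<and> (\<forall>e. \<forall>\<phi>\<in>C e. \<phi> ` b \<subseteq> b)"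

definition C_plus :: "(nat \<Rightarrow> ('a::comm_ring_1 \<Rightarrow> 'a) set) \<Rightarrow> 'a set \<Rightarrow> 'a set" where
  "C_plus C b = ideal_gen {\<phi> x | \<phi> x e. 0 < e \<and> \<phi> \<in> C e \<and> x \<in> b}"

definition F_pure :: "(nat \<Rightarrow> ('a::comm_ring_1 \<Rightarrow> 'a) set) \<Rightarrow> bool" where
  "F_pure C \<longleftrightarrow> C_plus C UNIV = UNIV"

definition center_of_F_purity :: "(nat \<Rightarrow> ('a::comm_ring_1 \<Rightarrow> 'a) set) \<Rightarrow> 'a set \<Rightarrow> bool" where
  "center_of_F_purity C P \<longleftrightarrow> is_prime_ideal P \<and> is_C_ideal C P \<and> \<not> C_plus C UNIV \<subseteq> P"

definition non_degenerate_along :: "(nat \<Rightarrow> ('a::comm_ring_1 \<Rightarrow> 'a) set) \<Rightarrow> 'a set \<Rightarrow> bool" where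
  "non_degenerate_along C a \<longleftrightarrow> (\<forall>P\<in>minimal_primes a. center_of_F_purity C P)"

definition purely_F_regular_along :: "(nat \<Rightarrow> ('a::comm_ring_1 \<Rightarrow> 'a) set) \<Rightarrow> 'a set \<Rightarrow> bool" where
  "purely_F_regular_along C a \<longleftrightarrow> non_degenerate_along C a \<and>
     (\<forall>b. is_C_ideal C b \<and> b \<noteq> UNIV \<longrightarrow> (\<exists>P\<in>minimal_primes a. b \<subseteq> P))"

end

theory Submission
  imports Defs
begin

lemma ideal_gen_ideal: "is_ideal (ideal_gen S)"
  unfolding ideal_gen_def is_ideal_def by auto

lemma ideal_gen_least: "is_ideal I \<Longrightarrow> S \<subseteq> I \<Longrightarrow> ideal_gen S \<subseteq> I"
  unfolding ideal_gen_def by auto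

lemma ideal_gen_sub: "S \<subseteq> ideal_gen S"
  unfolding ideal_gen_def by auto

lemma cm_add: "\<phi> \<in> cartier_maps p e \<Longrightarrow> \<phi> (x + y) = \<phi> x + \<phi> y"
  unfolding cartier_maps_def by auto

lemma cm_lin: "\<phi> \<in> cartier_maps p e \<Longrightarrow> \<phi> (r ^ (p ^ e) * x) = r * \<phi> x"
  unfolding cartier_maps_def by auto

lemma ideal_mult: "is_ideal I \<Longrightarrow> x \<in> I \<Longrightarrow> r * x \<in> I"
  unfolding is_ideal_def by auto

lemma ideal_mult2: "is_ideal I \<Longrightarrow> x \<in> I \<Longrightarrow> x * r \<in> I"
  unfolding is_ideal_def by (metis mult.commute)

lemma ideal_add: "is_ideal I \<Longrightarrow> x \<in> I \<Longrightarrow> y \<in> I \<Longrightarrow> x + y \<in> I"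
  unfolding is_ideal_def by auto

lemma ideal_zero: "is_ideal I \<Longrightarrow> 0 \<in> I"
  unfolding is_ideal_def by auto

lemma Cplus_C_ideal:
  assumes CA: "cartier_algebra p C"
  shows "is_C_ideal C (C_plus C UNIV)"
proof -
  let ?G = "{\<phi> x | \<phi> x e. 0 < e \<and> \<phi> \<in> C e \<and> x \<in> (UNIV::'a set)}"
  let ?I = "C_plus C UNIV"
  have I: "is_ideal ?I" unfolding C_plus_def by (rule ideal_gen_ideal)
  have sub: "\<forall>e. C e \<subseteq> cartier_maps p e" and comp: "\<forall>e e'. \<forall>\<phi>\<in>C e. \<forall>\<psi>\<in>C e'. \<phi> \<circ> \<psi> \<in> C (e + e')"
    using CA unfolding cartier_algebra_def by auto
  define J where "J = {y. y \<in> ?I \<and> (\<forall>e. \<forall>\<psi>\<in>C e. \<forall>r. \<psi> (r * y) \<in> ?I)}"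
  have J: "is_ideal J"
    unfolding is_ideal_def
  proof (intro conjI ballI allI)
    have "\<psi> 0 = 0" if "\<psi> \<in> C e" for e \<psi>
    proof -
      have "\<psi> (0 + 0) = \<psi> 0 + \<psi> 0" using cm_add that sub by blast
      then show ?thesis by simp
    qed
    then show "0 \<in> J" unfolding J_def using ideal_zero[OF I] by (simp only: mult_zero_right mem_Collect_eq) metis
  next
    fix x y assume "x \<in> J" "y \<in> J"
    then have hx: "x \<in> ?I" "\<And>e \<psi> r. \<psi> \<in> C e \<Longrightarrow> \<psi> (r * x) \<in> ?I"
      and hy: "y \<in> ?I" "\<And>e \<psi> r. \<psi> \<in> C e \<Longrightarrow> \<psi> (r * y) \<in> ?I" unfolding J_def by auto
    have "\<psi> (r * (x + y)) \<in> ?I" if "\<psi> \<in> C e" for e \<psi> r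
    proof -
      have "\<psi> (r * (x + y)) = \<psi> (r * x) + \<psi> (r * y)"
        using cm_add[of \<psi> p e] that sub by (auto simp: distrib_left)
      then show ?thesis using ideal_add[OF I hx(2)[OF that] hy(2)[OF that]] by simp
    qed
    then show "x + y \<in> J" unfolding J_def using ideal_add[OF I hx(1) hy(1)] by auto
  next
    fix r x assume "x \<in> J"
    then show "r * x \<in> J" unfolding J_def using I ideal_mult
      by (auto simp: mult.assoc[symmetric])
  qed
  have "?G \<subseteq> J"
  proof
    fix z assume "z \<in> ?G"
    then obtain \<phi> x e where z: "z = \<phi> x" and e: "0 < e" and ph: "\<phi> \<in> C e" by auto
    have zI: "z \<in> ?I" unfolding C_plus_def using \<open>z \<in> ?G\<close> ideal_gen_sub by (rule subsetD[rotated])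
    have "\<psi> (r * z) \<in> ?I" if "\<psi> \<in> C e'" for e' \<psi> r
    proof -
      have "r * z = \<phi> (r ^ (p ^ e) * x)" using z ph sub cm_lin by (metis subsetD)
      hence "\<psi> (r * z) = (\<psi> \<circ> \<phi>) (r ^ (p ^ e) * x)" by simp
      moreover have "\<psi> \<circ> \<phi> \<in> C (e' + e)" using comp that ph by blast
      ultimately have "\<psi> (r * z) \<in> ?G" using e
        by (intro CollectI exI[of _ "\<psi> \<circ> \<phi>"] exI[of _ "r ^ (p ^ e) * x"] exI[of _ "e' + e"]) simp
      then show ?thesis unfolding C_plus_def by (rule subsetD[OF ideal_gen_sub])
    qed
    then show "z \<in> J" unfolding J_def using zI by auto
  qed
  hence "?I \<subseteq> J" unfolding C_plus_def using J ideal_gen_least by blast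
  hence "\<psi> y \<in> ?I" if "\<psi> \<in> C e" "y \<in> ?I" for e \<psi> y
    using that unfolding J_def by (metis (no_types, lifting) mem_Collect_eq mult_1 subsetD)
  then show ?thesis unfolding is_C_ideal_def using I by auto
qed

lemma radical_step:
  assumes CA: "cartier_algebra p C" and pr: "prime p" and FP: "F_pure C"
    and a: "is_C_ideal C a" and y: "\<And>e. 0 < e \<Longrightarrow> y ^ (p ^ e) \<in> a"
  shows "y \<in> a"
proof -
  have sub: "\<forall>e. C e \<subseteq> cartier_maps p e" using CA unfolding cartier_algebra_def by auto
  have aI: "is_ideal a" and aC: "\<forall>e. \<forall>\<phi>\<in>C e. \<phi> ` a \<subseteq> a" using a unfolding is_C_ideal_def by auto
  define K where "K = {z. z * y \<in> a}"
  have K: "is_ideal K" unfolding K_def is_ideal_def using aI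
    by (auto simp: distrib_right ideal_zero ideal_add mult.assoc ideal_mult)
  have "{\<phi> x | \<phi> x e. 0 < e \<and> \<phi> \<in> C e \<and> x \<in> (UNIV::'a set)} \<subseteq> K"
  proof
    fix z assume "z \<in> {\<phi> x | \<phi> x e. 0 < e \<and> \<phi> \<in> C e \<and> x \<in> (UNIV::'a set)}"
    then obtain \<phi> x e where z: "z = \<phi> x" and e: "0 < e" and ph: "\<phi> \<in> C e" by auto
    have "z * y = \<phi> (y ^ (p ^ e) * x)" using z ph sub cm_lin by (metis mult.commute subsetD)
    moreover have "y ^ (p ^ e) * x \<in> a" using y[OF e] aI ideal_mult2 by blast
    ultimately show "z \<in> K" unfolding K_def using aC ph by auto
  qed
  hence "C_plus C UNIV \<subseteq> K" unfolding C_plus_def using K ideal_gen_least by blast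
  hence "1 \<in> K" using FP unfolding F_pure_def by auto
  thus ?thesis unfolding K_def by simp
qed

lemma radical_lemma:
  assumes CA: "cartier_algebra p C" and pr: "prime p" and FP: "F_pure C"
    and a: "is_C_ideal C a"
  shows "x ^ n \<in> a \<Longrightarrow> x \<in> a"
proof (induction n rule: less_induct)
  case (less n)
  have aI: "is_ideal a" using a unfolding is_C_ideal_def by auto
  show ?case
  proof (cases "n \<le> 1")
    case True
    then consider "n = 0" | "n = 1" by linarith
    then show ?thesis
    proof cases
      case 1 then have "1 \<in> a" using less.prems by simp
      then show ?thesis using ideal_mult[OF aI, of 1 x] by simp
    next
      case 2 then show ?thesis using less.prems by simp
    qed
  next
    case False
    define k where "k = (n + 1) div 2"
    have kn: "k < n" "n \<le> 2 * k" using False unfolding k_def by auto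
    have "x ^ k \<in> a"
    proof (rule radical_step[OF CA pr FP a])
      fix e :: nat assume e: "0 < e"
      have "2 \<le> p" using pr prime_ge_2_nat by blast
      have "p ^ 1 \<le> p ^ e" using e \<open>2 \<le> p\<close> by (intro power_increasing) auto
      hence "2 \<le> p ^ e" using \<open>2 \<le> p\<close> by simp
      hence "n \<le> k * p ^ e" using kn by (metis mult.commute mult_le_mono1 order.trans)
      then obtain d where "k * p ^ e = n + d" using le_Suc_ex by blast
      hence "(x ^ k) ^ (p ^ e) = x ^ n * x ^ d" by (simp add: power_mult[symmetric] power_add)
      then show "(x ^ k) ^ (p ^ e) \<in> a" using less.prems aI ideal_mult2 by metis
    qed
    then show ?thesis using less.IH kn by blast
  qed
qed

theorem proposition2p8:
  fixes p :: nat
    and C :: "nat \<Rightarrow> ('a::comm_ring_1 \<Rightarrow> 'a) set"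
    and a :: "'a set"
  assumes "char_p_ring TYPE('a) p"
    and "noetherian TYPE('a)"
    and "F_finite TYPE('a) p"
    and "cartier_algebra p C"
    and "is_C_ideal C a"
    and "purely_F_regular_along C a"
  shows "F_pure C \<and> is_radical_ideal a \<and>
         (\<forall>P\<in>minimal_primes a. \<forall>Q\<in>minimal_primes a. P \<noteq> Q \<longrightarrow> ideal_sum P Q = UNIV)"
proof -
  have pr: "prime p" using assms(1) unfolding char_p_ring_def by auto
  have nd: "\<And>P. P \<in> minimal_primes a \<Longrightarrow> center_of_F_purity C P"
    and reg: "\<And>b. is_C_ideal C b \<Longrightarrow> b \<noteq> UNIV \<Longrightarrow> \<exists>P\<in>minimal_primes a. b \<subseteq> P"
    using assms(6) unfolding purely_F_regular_along_def non_degenerate_along_def by auto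
  have FP: "F_pure C"
  proof (rule ccontr)
    assume "\<not> F_pure C"
    then obtain P where "P \<in> minimal_primes a" "C_plus C UNIV \<subseteq> P"
      using reg[OF Cplus_C_ideal[OF assms(4)]] unfolding F_pure_def by blast
    then show False using nd unfolding center_of_F_purity_def by blast
  qed
  have aI: "is_ideal a" using assms(5) unfolding is_C_ideal_def by auto
  have rad: "is_radical_ideal a"
    unfolding is_radical_ideal_def radical_def
    using aI radical_lemma[OF assms(4) pr FP assms(5)] by (auto intro: exI[of _ 1])
  have cop: "ideal_sum P Q = UNIV" if P: "P \<in> minimal_primes a" and Q: "Q \<in> minimal_primes a" and ne: "P \<noteq> Q" for P Q
  proof (rule ccontr)
    assume nU: "ideal_sum P Q \<noteq> UNIV"
    have PC: "is_C_ideal C P" "is_C_ideal C Q" using nd P Q unfolding center_of_F_purity_def by auto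
    have PI: "is_ideal P" "is_ideal Q" using PC unfolding is_C_ideal_def by auto
    have sub: "\<forall>e. C e \<subseteq> cartier_maps p e" using assms(4) unfolding cartier_algebra_def by auto
    have SI: "is_ideal (ideal_sum P Q)" unfolding is_ideal_def ideal_sum_def
    proof (intro conjI ballI allI)
      show "0 \<in> {x + y |x y. x \<in> P \<and> y \<in> Q}" using PI ideal_zero by force
    next
      fix u v assume "u \<in> {x + y |x y. x \<in> P \<and> y \<in> Q}" "v \<in> {x + y |x y. x \<in> P \<and> y \<in> Q}"
      then obtain x y x' y' where "u = x + y" "v = x' + y'" "x \<in> P" "y \<in> Q" "x' \<in> P" "y' \<in> Q" by auto
      then show "u + v \<in> {x + y |x y. x \<in> P \<and> y \<in> Q}" using PI ideal_add
        by (intro CollectI exI[of _ "x + x'"] exI[of _ "y + y'"]) (auto simp: algebra_simps)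
    next
      fix r u assume "u \<in> {x + y |x y. x \<in> P \<and> y \<in> Q}"
      then obtain x y where "u = x + y" "x \<in> P" "y \<in> Q" by auto
      moreover have "r * x \<in> P" "r * y \<in> Q" using PI ideal_mult \<open>x \<in> P\<close> \<open>y \<in> Q\<close> by blast+
      moreover have "r * u = r * x + r * y" using \<open>u = x + y\<close> by (simp add: distrib_left)
      ultimately show "r * u \<in> {x + y |x y. x \<in> P \<and> y \<in> Q}" by blast
    qed
    have SC: "is_C_ideal C (ideal_sum P Q)" unfolding is_C_ideal_def
    proof (intro conjI SI allI ballI subsetI)
      fix e \<phi> z assume ph: "\<phi> \<in> C e" and z: "z \<in> \<phi> ` ideal_sum P Q"
      then obtain x y where "z = \<phi> (x + y)" "x \<in> P" "y \<in> Q" unfolding ideal_sum_def by auto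
      moreover have "\<phi> (x + y) = \<phi> x + \<phi> y" using ph sub cm_add by blast
      ultimately show "z \<in> ideal_sum P Q" using PC ph unfolding is_C_ideal_def ideal_sum_def by blast
    qed
    obtain M where M: "M \<in> minimal_primes a" "ideal_sum P Q \<subseteq> M" using reg[OF SC nU] by blast
    have "P \<subseteq> M" "Q \<subseteq> M" using M(2) PI ideal_zero unfolding ideal_sum_def by force+
    then have "P = M" "Q = M" using M(1) P Q unfolding minimal_primes_def by auto
    then show False using ne by simp
  qed
  show ?thesis using FP rad cop by blast
qed

end
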